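(* Let $g(x;\theta)$ be a family of densities in the class $\mathcal{G}$ with $g(x;0)=\alpha x^{-\alpha-1}$, and let $h(x)=\frac{\partial}{\partial\theta}g(x;\theta)\big|_{\theta=0}$. Suppose the Kullback–Leibler information $$K(\theta)=\inf_{\lambda>0}\int_1^\infty \ln\frac{g(x;\theta)}{\lambda x^{-\lambda-1}}\,g(x;\theta)\,dx$$ is well defined. Then, as $\theta\to0$, $$2K(\theta)=\theta^2\left(\int_1^\infty \frac{x^{\alpha+1}}{\alpha}h^2(x)\,dx-\left(\int_1^\infty \alpha h(x)\ln x\,dx\right)^2\right)+o(\theta^2).$$
   Context: $\mathcal{G}$ is a class of families of densities $g(x;\theta)$ on $[1,\infty)$, $\theta$ in a neighbourhood of $0$, with $g(x;0)$ a Pareto density $\alpha x^{-\alpha-1}$ ($\alpha>0$), such that differentiation in $\theta$ under the integral sign is permitted in all integrals appearing. *)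

theory Defs
  imports "HOL-Analysis.Analysis" "HOL-Library.Landau_Symbols"
begin

definition int1 :: "(real \<Rightarrow> real) \<Rightarrow> real" where
  "int1 f = (LINT x:{1..}|lborel. f x)"

definition diff_under_int ::
  "(real \<Rightarrow> real \<Rightarrow> real) \<Rightarrow> (real \<Rightarrow> real \<Rightarrow> real) \<Rightarrow> real set \<Rightarrow> bool" where
  "diff_under_int \<phi> \<phi>' U \<longleftrightarrow>
     (\<forall>t\<in>U. set_integrable lborel {1..} (\<lambda>x. \<phi> x t)
          \<and> set_integrable lborel {1..} (\<lambda>x. \<phi>' x t)
          \<and> (\<forall>x\<ge>1. ((\<lambda>s. \<phi> x s) has_real_derivative \<phi>' x t) (at t))
          \<and> ((\<lambda>s. int1 (\<lambda>x. \<phi> x s)) has_real_derivative int1 (\<lambda>x. \<phi>' x t)) (at t))"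

text \<open>Integrand of the KL information between g(.;t) and the Pareto density
  with index l, and its first and second t-derivatives.\<close>
definition kl_integrand :: "(real \<Rightarrow> real \<Rightarrow> real) \<Rightarrow> real \<Rightarrow> real \<Rightarrow> real \<Rightarrow> real" where
  "kl_integrand g l x t = ln (g x t / (l * x powr (-l-1))) * g x t"

definition kl_integrand_d1 ::
  "(real \<Rightarrow> real \<Rightarrow> real) \<Rightarrow> (real \<Rightarrow> real \<Rightarrow> real) \<Rightarrow> real \<Rightarrow> real \<Rightarrow> real \<Rightarrow> real" where
  "kl_integrand_d1 g g1 l x t = g1 x t * (ln (g x t / (l * x powr (-l-1))) + 1)"

definition kl_integrand_d2 ::
  "(real \<Rightarrow> real \<Rightarrow> real) \<Rightarrow> (real \<Rightarrow> real \<Rightarrow> real) \<Rightarrow> (real \<Rightarrow> real \<Rightarrow> real)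
     \<Rightarrow> real \<Rightarrow> real \<Rightarrow> real \<Rightarrow> real" where
  "kl_integrand_d2 g g1 g2 l x t =
     g2 x t * (ln (g x t / (l * x powr (-l-1))) + 1) + (g1 x t)^2 / g x t"

definition KL :: "(real \<Rightarrow> real \<Rightarrow> real) \<Rightarrow> real \<Rightarrow> real" where
  "KL g t = Inf {int1 (\<lambda>x. kl_integrand g l x t) | l. l > 0}"

end

theory Submission
  imports Defs "HOL-Real_Asymp.Real_Asymp"
begin

lemma taylor2:
  fixes f f' :: "real \<Rightarrow> real" and c :: real
  assumes ev: "eventually (\<lambda>t. (f has_real_derivative f' t) (at t)) (nhds 0)"
    and d2: "(f' has_real_derivative c) (at 0)" and f0: "f 0 = 0" and f'0: "f' 0 = 0"
  shows "(\<lambda>t. f t - c/2 * t^2) \<in> o[at 0](\<lambda>t. t^2)"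
proof (rule landau_o.smallI)
  fix e :: real assume e: "e > 0"
  from ev obtain r where r: "r > 0" "\<And>t. \<bar>t\<bar> < r \<Longrightarrow> (f has_real_derivative f' t) (at t)"
    unfolding eventually_nhds_metric dist_real_def by auto
  have "((\<lambda>s. (f' s - f' 0) / (s - 0)) \<longlongrightarrow> c) (at 0)"
    using d2 by (simp add: has_field_derivative_iff)
  hence "((\<lambda>s. f' s / s) \<longlongrightarrow> c) (at 0)" using f'0 by simp
  hence "eventually (\<lambda>s. dist (f' s / s) c < e) (at 0)" using e by (rule tendstoD)
  then obtain r2 where r2: "r2 > 0" "\<And>s. s \<noteq> 0 \<Longrightarrow> \<bar>s\<bar> < r2 \<Longrightarrow> \<bar>f' s / s - c\<bar> < e"
    unfolding eventually_at dist_real_def by auto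
  have B: "\<bar>f' s - c * s\<bar> \<le> e * \<bar>s\<bar>" if "\<bar>s\<bar> < r2" for s
  proof (cases "s = 0")
    case True thus ?thesis using f'0 by simp
  next
    case False
    have "f' s - c * s = (f' s / s - c) * s" using False by (simp add: field_simps)
    hence "\<bar>f' s - c * s\<bar> = \<bar>f' s / s - c\<bar> * \<bar>s\<bar>" by (simp add: abs_mult)
    also have "\<dots> \<le> e * \<bar>s\<bar>" using r2(2)[OF False that] by (intro mult_right_mono) auto
    finally show ?thesis .
  qed
  define \<phi> where "\<phi> s = f s - c/2 * s^2" for s
  have D: "(\<phi> has_real_derivative (f' s - c * s)) (at s)" if "\<bar>s\<bar> < r" for s
    unfolding \<phi>_def using r(2)[OF that] by (auto intro!: derivative_eq_intros)
  have "\<bar>\<phi> t\<bar> \<le> e * \<bar>t^2\<bar>" if t: "\<bar>t\<bar> < min r r2" for t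
  proof (cases "t = 0")
    case True thus ?thesis using f0 by (simp add: \<phi>_def)
  next
    case False
    show ?thesis
    proof (cases "t > 0")
      case True
      obtain z where z: "0 < z" "z < t" "\<phi> t - \<phi> 0 = (t - 0) * (f' z - c * z)"
        using MVT2[of 0 t \<phi> "\<lambda>s. f' s - c * s"] True t D by auto
      have "\<bar>\<phi> t\<bar> = t * \<bar>f' z - c * z\<bar>" using z True f0 by (simp add: \<phi>_def abs_mult)
      also have "\<dots> \<le> t * (e * \<bar>z\<bar>)" using B[of z] z t True by (intro mult_left_mono) auto
      also have "\<dots> \<le> t * (e * t)" using z e True by (intro mult_left_mono) auto
      finally show ?thesis by (simp add: power2_eq_square mult_ac)
    next
      case False'': False
      hence tn: "t < 0" using \<open>t \<noteq> 0\<close> by simp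
      obtain z where z: "t < z" "z < 0" "\<phi> 0 - \<phi> t = (0 - t) * (f' z - c * z)"
        using MVT2[of t 0 \<phi> "\<lambda>s. f' s - c * s"] tn t D by auto
      have "\<phi> t = t * (f' z - c * z)" using z f0 by (simp add: \<phi>_def algebra_simps)
      hence "\<bar>\<phi> t\<bar> = (-t) * \<bar>f' z - c * z\<bar>" using tn by (simp add: abs_mult)
      also have "\<dots> \<le> (-t) * (e * \<bar>z\<bar>)" using B[of z] z t tn by (intro mult_left_mono) auto
      also have "\<dots> \<le> (-t) * (e * (-t))" using z e tn by (intro mult_left_mono) auto
      finally show ?thesis by (simp add: power2_eq_square mult_ac)
    qed
  qed
  moreover have "eventually (\<lambda>t. \<bar>t\<bar> < min r r2) (at 0)"
    unfolding eventually_at dist_real_def using r r2 by (intro exI[of _ "min r r2"]) auto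
  ultimately show "eventually (\<lambda>t. norm (f t - c/2 * t^2) \<le> e * norm (t^2)) (at 0)"
    by (auto elim!: eventually_mono simp: \<phi>_def)
qed

lemma pareto_log_int:
  fixes a :: real assumes a: "a > 0"
  shows "(LINT x:{1..}|lborel. a * x powr (-a-1) * ln x) = 1/a"
proof -
  define F where "F x = - (x powr (-a)) * ln x - x powr (-a) / a" for x :: real
  have D: "DERIV F x :> a * x powr (-a-1) * ln x" if "x > 0" for x
  proof -
    have "DERIV F x :> - ((-a) * x powr (-a-1)) * ln x - x powr (-a) * (1/x) - (-a) * x powr (-a-1) / a"
      unfolding F_def using that a
      by (intro derivative_eq_intros refl) auto
    moreover have "x powr (-a) * (1/x) = x powr (-a-1)" using that
      by (simp add: powr_diff divide_simps powr_minus)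
    ultimately show ?thesis using a by (simp add: field_simps)
  qed
  have lim1: "(F \<longlongrightarrow> -1/a) (at_right 1)"
  proof -
    have "isCont F 1" unfolding F_def using a by (auto intro!: continuous_intros)
    hence "(F \<longlongrightarrow> F 1) (at_right 1)" by (simp add: isCont_def filterlim_at_split)
    moreover have "F 1 = -1/a" by (simp add: F_def)
    ultimately show ?thesis by simp
  qed
  have lim2: "(F \<longlongrightarrow> 0) at_top"
    unfolding F_def using a by real_asymp
  have r: "(LBINT x=ereal 1..\<infinity>. a * x powr (-a-1) * ln x) = 0 - (-1/a)"
    apply (rule interval_integral_FTC_nonneg(2)[where F=F])
    using D lim1 lim2 a by (auto simp: ereal_tendsto_simps1 intro!: continuous_intros)
  have "(LBINT x=ereal 1..\<infinity>. a * x powr (-a-1) * ln x) = (LINT x:{1<..}|lborel. a * x powr (-a-1) * ln x)"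
    by (subst interval_integral_Ioi) auto
  also have "\<dots> = (LINT x:{1..}|lborel. a * x powr (-a-1) * ln x)"
    by (rule set_integral_cong_set) (auto simp: set_borel_measurable_def intro!: AE_I[where N="{1}"])
  finally show ?thesis using r by simp
qed

lemma lin2:
  fixes u v w :: "real \<Rightarrow> real" and a b :: real
  assumes "set_integrable lborel {1..} u" "set_integrable lborel {1..} v"
    "\<forall>x\<ge>1. w x = a * u x + b * v x"
  shows "set_integrable lborel {1..} w" "int1 w = a * int1 u + b * int1 v"
proof -
  have i: "set_integrable lborel {1..} (\<lambda>x. a * u x + b * v x)"
    using assms by (intro set_integral_add set_integrable_mult_right) auto
  have e: "set_integrable lborel {1..} w = set_integrable lborel {1..} (\<lambda>x. a * u x + b * v x)"
    by (rule set_integrable_cong) (use assms(3) in auto)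
  show "set_integrable lborel {1..} w" using i e by simp
  have "int1 w = int1 (\<lambda>x. a * u x + b * v x)" unfolding int1_def
    by (rule set_lebesgue_integral_cong) (use assms(3) in auto)
  also have "\<dots> = a * int1 u + b * int1 v" unfolding int1_def
    using assms by (subst set_integral_add(2)) auto
  finally show "int1 w = a * int1 u + b * int1 v" .
qed

lemma solve2:
  fixes u v w :: "real \<Rightarrow> real" and a b :: real
  assumes "set_integrable lborel {1..} u" "set_integrable lborel {1..} w" "b \<noteq> 0"
    "\<forall>x\<ge>1. w x = a * u x + b * v x"
  shows "set_integrable lborel {1..} v"
proof -
  have "\<forall>x\<ge>1. v x = (1/b) * w x + (-a/b) * u x" using assms(3,4) by (auto simp: field_simps)
  from lin2(1)[OF assms(2,1) this] show ?thesis .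
qed

theorem lemma3:
  fixes g g1 g2 :: "real \<Rightarrow> real \<Rightarrow> real" and h :: "real \<Rightarrow> real"
    and \<alpha> \<delta> :: real
  assumes alpha_pos: "\<alpha> > 0" and delta_pos: "\<delta> > 0"
    and g_pos: "\<forall>t\<in>ball 0 \<delta>. \<forall>x\<ge>1. g x t > 0"
    and g_density: "\<forall>t\<in>ball 0 \<delta>. set_integrable lborel {1..} (\<lambda>x. g x t) \<and> int1 (\<lambda>x. g x t) = 1"
    and g_pareto: "\<forall>x\<ge>1. g x 0 = \<alpha> * x powr (-\<alpha>-1)"
    and g1_deriv: "\<forall>t\<in>ball 0 \<delta>. \<forall>x\<ge>1. ((\<lambda>s. g x s) has_real_derivative g1 x t) (at t)"
    and g2_deriv: "\<forall>t\<in>ball 0 \<delta>. \<forall>x\<ge>1. ((\<lambda>s. g1 x s) has_real_derivative g2 x t) (at t)"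
    and h_def: "\<forall>x\<ge>1. ((\<lambda>s. g x s) has_real_derivative h x) (at 0)"
    and dui_g: "diff_under_int g g1 (ball 0 \<delta>)"
    and dui_g1: "diff_under_int g1 g2 (ball 0 \<delta>)"
    and dui_kl: "\<forall>l>0. diff_under_int (kl_integrand g l) (kl_integrand_d1 g g1 l) (ball 0 \<delta>)"
    and dui_kl1: "\<forall>l>0. diff_under_int (kl_integrand_d1 g g1 l) (kl_integrand_d2 g g1 g2 l) (ball 0 \<delta>)"
  shows "(\<lambda>t. 2 * KL g t
            - t^2 * (int1 (\<lambda>x. x powr (\<alpha>+1) / \<alpha> * (h x)^2)
                     - (int1 (\<lambda>x. \<alpha> * h x * ln x))^2))
         \<in> o[at 0](\<lambda>t. t^2)"
  proof -
  define B where "B = ball (0::real) \<delta>"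
  have B0: "0 \<in> B" using delta_pos by (simp add: B_def)
  have oB: "open B" by (simp add: B_def)
  define F where "F l t = int1 (\<lambda>x. kl_integrand g l x t)" for l t
  define F1 where "F1 l t = int1 (\<lambda>x. kl_integrand_d1 g g1 l x t)" for l t
  define F2 where "F2 l t = int1 (\<lambda>x. kl_integrand_d2 g g1 g2 l x t)" for l t
  have gpos: "g x t > 0" if "t \<in> B" "x \<ge> 1" for x t using g_pos that by (auto simp: B_def)
  have kl_int: "set_integrable lborel {1..} (\<lambda>x. kl_integrand g l x t)"
    and kl1_int: "set_integrable lborel {1..} (\<lambda>x. kl_integrand_d1 g g1 l x t)"
    and kl2_int: "set_integrable lborel {1..} (\<lambda>x. kl_integrand_d2 g g1 g2 l x t)"
    and dF: "(F l has_real_derivative F1 l t) (at t)"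
    and dF1: "(F1 l has_real_derivative F2 l t) (at t)"
    if "l > 0" "t \<in> B" for l t
    using dui_kl dui_kl1 that unfolding diff_under_int_def B_def F_def F1_def F2_def
    by (auto simp: fun_eq_iff)
  have g_int: "set_integrable lborel {1..} (\<lambda>x. g x t)" and g_one: "int1 (\<lambda>x. g x t) = 1"
    if "t \<in> B" for t using g_density that by (auto simp: B_def)
  have g1_int: "set_integrable lborel {1..} (\<lambda>x. g1 x t)"
    and dG: "((\<lambda>s. int1 (\<lambda>x. g x s)) has_real_derivative int1 (\<lambda>x. g1 x t)) (at t)"
    if "t \<in> B" for t using dui_g that unfolding diff_under_int_def B_def by auto
  have g2_int: "set_integrable lborel {1..} (\<lambda>x. g2 x t)"
    and dG1: "((\<lambda>s. int1 (\<lambda>x. g1 x s)) has_real_derivative int1 (\<lambda>x. g2 x t)) (at t)"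
    if "t \<in> B" for t using dui_g1 that unfolding diff_under_int_def B_def by auto
  have g1_zero: "int1 (\<lambda>x. g1 x t) = 0" if "t \<in> B" for t
  proof -
    have "((\<lambda>s. int1 (\<lambda>x. g x s)) has_real_derivative 0) (at t)"
      by (rule has_field_derivative_transform_within_open[of "\<lambda>_. 1" _ _ B])
         (use that oB g_one in auto)
    thus ?thesis using dG[OF that] DERIV_unique by blast
  qed
  have g2_zero: "int1 (\<lambda>x. g2 x 0) = 0"
  proof -
    have "((\<lambda>s. int1 (\<lambda>x. g1 x s)) has_real_derivative 0) (at 0)"
      by (rule has_field_derivative_transform_within_open[of "\<lambda>_. 0" _ _ B])
         (use B0 oB g1_zero in auto)
    thus ?thesis using dG1[OF B0] DERIV_unique by blast
  qed
  have hg1: "g1 x 0 = h x" if "x \<ge> 1" for x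
    using g1_deriv h_def that B0 DERIV_unique unfolding B_def by blast
  have lnq: "ln (g x t / (l * x powr (-l-1))) = ln (g x t) - ln l + (l+1) * ln x"
    if "t \<in> B" "x \<ge> 1" "l > 0" for x t l
    using gpos[OF that(1,2)] that by (simp add: ln_div ln_mult algebra_simps)
  have pw0: "kl_integrand g l x t = (-ln l) * g x t + (l-1) * (g x t * ln x) + kl_integrand g 1 x t"
    if "t \<in> B" "x \<ge> 1" "l > 0" for x t l
    unfolding kl_integrand_def lnq[OF that] lnq[OF that(1,2) zero_less_one] by (simp add: algebra_simps)
  have pw1: "kl_integrand_d1 g g1 l x t = (-ln l) * g1 x t + (l-1) * (g1 x t * ln x) + kl_integrand_d1 g g1 1 x t"
    if "t \<in> B" "x \<ge> 1" "l > 0" for x t l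
    unfolding kl_integrand_d1_def lnq[OF that] lnq[OF that(1,2) zero_less_one] by (simp add: algebra_simps)
  have pw2: "kl_integrand_d2 g g1 g2 l x t = (-ln l) * g2 x t + (l-1) * (g2 x t * ln x) + kl_integrand_d2 g g1 g2 1 x t"
    if "t \<in> B" "x \<ge> 1" "l > 0" for x t l
    unfolding kl_integrand_d2_def lnq[OF that] lnq[OF that(1,2) zero_less_one] by (simp add: algebra_simps)
  define e where "e = exp (1::real)"
  have e1: "e - 1 \<noteq> 0" "e > 0" "ln e = 1" by (auto simp: e_def)
  have M_int: "set_integrable lborel {1..} (\<lambda>x. g x t * ln x)" if t: "t \<in> B" for t
  proof (rule solve2[OF g_int[OF t]])
    show "set_integrable lborel {1..} (\<lambda>x. kl_integrand g e x t - kl_integrand g 1 x t)"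
      using kl_int[OF e1(2) t] kl_int[OF zero_less_one t] by (rule set_integral_diff(1))
    show "\<forall>x\<ge>1. kl_integrand g e x t - kl_integrand g 1 x t = (- ln e) * g x t + (e - 1) * (g x t * ln x)"
      using pw0[OF t _ e1(2)] by auto
  qed (use e1 in auto)
  define M where "M t = int1 (\<lambda>x. g x t * ln x)" for t
  have Fdec: "F l t = F 1 t - ln l + (l-1) * M t" if t: "t \<in> B" and l: "l > 0" for t l
  proof -
    have "int1 (\<lambda>x. kl_integrand g l x t - kl_integrand g 1 x t) = (- ln l) * int1 (\<lambda>x. g x t) + (l - 1) * M t"
      unfolding M_def by (rule lin2(2)[OF g_int[OF t] M_int[OF t]]) (use pw0[OF t _ l] in auto)
    moreover have "int1 (\<lambda>x. kl_integrand g l x t - kl_integrand g 1 x t) = F l t - F 1 t"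
      unfolding int1_def F_def using kl_int[OF l t] kl_int[OF zero_less_one t] by (rule set_integral_diff(2))
    ultimately show ?thesis using g_one[OF t] by simp
  qed
  have M1_int: "set_integrable lborel {1..} (\<lambda>x. g1 x 0 * ln x)"
  proof (rule solve2[OF g1_int[OF B0]])
    show "set_integrable lborel {1..} (\<lambda>x. kl_integrand_d1 g g1 e x 0 - kl_integrand_d1 g g1 1 x 0)"
      using kl1_int[OF e1(2) B0] kl1_int[OF zero_less_one B0] by (rule set_integral_diff(1))
    show "\<forall>x\<ge>1. kl_integrand_d1 g g1 e x 0 - kl_integrand_d1 g g1 1 x 0 = (- ln e) * g1 x 0 + (e - 1) * (g1 x 0 * ln x)"
      using pw1[OF B0 _ e1(2)] by auto
  qed (use e1 in auto)
  define M1 where "M1 = int1 (\<lambda>x. g1 x 0 * ln x)"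
  have F1dec: "F1 e 0 - F1 1 0 = (e - 1) * M1"
  proof -
    have "int1 (\<lambda>x. kl_integrand_d1 g g1 e x 0 - kl_integrand_d1 g g1 1 x 0) = (- ln e) * int1 (\<lambda>x. g1 x 0) + (e - 1) * M1"
      unfolding M1_def by (rule lin2(2)[OF g1_int[OF B0] M1_int]) (use pw1[OF B0 _ e1(2)] in auto)
    moreover have "int1 (\<lambda>x. kl_integrand_d1 g g1 e x 0 - kl_integrand_d1 g g1 1 x 0) = F1 e 0 - F1 1 0"
      unfolding int1_def F1_def using kl1_int[OF e1(2) B0] kl1_int[OF zero_less_one B0] by (rule set_integral_diff(2))
    ultimately show ?thesis using g1_zero[OF B0] by simp
  qed
  have M2_int: "set_integrable lborel {1..} (\<lambda>x. g2 x 0 * ln x)"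
  proof (rule solve2[OF g2_int[OF B0]])
    show "set_integrable lborel {1..} (\<lambda>x. kl_integrand_d2 g g1 g2 e x 0 - kl_integrand_d2 g g1 g2 1 x 0)"
      using kl2_int[OF e1(2) B0] kl2_int[OF zero_less_one B0] by (rule set_integral_diff(1))
    show "\<forall>x\<ge>1. kl_integrand_d2 g g1 g2 e x 0 - kl_integrand_d2 g g1 g2 1 x 0 = (- ln e) * g2 x 0 + (e - 1) * (g2 x 0 * ln x)"
      using pw2[OF B0 _ e1(2)] by auto
  qed (use e1 in auto)
  define M2 where "M2 = int1 (\<lambda>x. g2 x 0 * ln x)"
  have F2dec: "F2 e 0 - F2 1 0 = (e - 1) * M2"
  proof -
    have "int1 (\<lambda>x. kl_integrand_d2 g g1 g2 e x 0 - kl_integrand_d2 g g1 g2 1 x 0) = (- ln e) * int1 (\<lambda>x. g2 x 0) + (e - 1) * M2"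
      unfolding M2_def by (rule lin2(2)[OF g2_int[OF B0] M2_int]) (use pw2[OF B0 _ e1(2)] in auto)
    moreover have "int1 (\<lambda>x. kl_integrand_d2 g g1 g2 e x 0 - kl_integrand_d2 g g1 g2 1 x 0) = F2 e 0 - F2 1 0"
      unfolding int1_def F2_def using kl2_int[OF e1(2) B0] kl2_int[OF zero_less_one B0] by (rule set_integral_diff(2))
    ultimately show ?thesis using g2_zero by simp
  qed
  have M0: "M 0 = 1 / \<alpha>"
  proof -
    have "M 0 = (LINT x:{1..}|lborel. \<alpha> * x powr (-\<alpha>-1) * ln x)"
      unfolding M_def int1_def by (rule set_lebesgue_integral_cong) (use g_pareto in auto)
    thus ?thesis using pareto_log_int[OF alpha_pos] by simp
  qed
  have lng0: "ln (g x 0) = ln \<alpha> - (\<alpha> + 1) * ln x" if "x \<ge> 1" for x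
    using g_pareto that alpha_pos by (simp add: ln_mult algebra_simps)
  have F10: "F 1 0 = ln \<alpha> + (1 - \<alpha>) / \<alpha>"
  proof -
    have "F 1 0 = ln \<alpha> * int1 (\<lambda>x. g x 0) + (1 - \<alpha>) * M 0"
      unfolding F_def M_def
    proof (rule lin2(2)[OF g_int[OF B0] M_int[OF B0]], intro allI impI)
      fix x :: real assume x: "x \<ge> 1"
      show "kl_integrand g 1 x 0 = ln \<alpha> * g x 0 + (1 - \<alpha>) * (g x 0 * ln x)"
        unfolding kl_integrand_def lnq[OF B0 x zero_less_one] lng0[OF x] by (simp add: algebra_simps)
    qed
    thus ?thesis using g_one[OF B0] M0 by simp
  qed
  have F110: "F1 1 0 = (1 - \<alpha>) * M1"
  proof -
    have "F1 1 0 = (ln \<alpha> + 1) * int1 (\<lambda>x. g1 x 0) + (1 - \<alpha>) * M1"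
      unfolding F1_def M1_def
    proof (rule lin2(2)[OF g1_int[OF B0] M1_int], intro allI impI)
      fix x :: real assume x: "x \<ge> 1"
      show "kl_integrand_d1 g g1 1 x 0 = (ln \<alpha> + 1) * g1 x 0 + (1 - \<alpha>) * (g1 x 0 * ln x)"
        unfolding kl_integrand_d1_def lnq[OF B0 x zero_less_one] lng0[OF x] by (simp add: algebra_simps)
    qed
    thus ?thesis using g1_zero[OF B0] by simp
  qed
  define I where "I = int1 (\<lambda>x. (g1 x 0)^2 / g x 0)"
  have F210: "F2 1 0 = (1 - \<alpha>) * M2 + I"
  proof -
    define Q where "Q x = (ln \<alpha> + 1) * g2 x 0 + (1 - \<alpha>) * (g2 x 0 * ln x)" for x
    have Qpw: "\<forall>x\<ge>1. Q x = (ln \<alpha> + 1) * g2 x 0 + (1 - \<alpha>) * (g2 x 0 * ln x)" by (simp add: Q_def)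
    have Qi: "set_integrable lborel {1..} Q" by (rule lin2(1)[OF g2_int[OF B0] M2_int Qpw])
    have Qv: "int1 Q = (ln \<alpha> + 1) * int1 (\<lambda>x. g2 x 0) + (1 - \<alpha>) * M2"
      unfolding M2_def by (rule lin2(2)[OF g2_int[OF B0] M2_int Qpw])
    have pw: "\<forall>x\<ge>1. kl_integrand_d2 g g1 g2 1 x 0 = 1 * Q x + 1 * ((g1 x 0)^2 / g x 0)"
    proof (intro allI impI)
      fix x :: real assume x: "x \<ge> 1"
      show "kl_integrand_d2 g g1 g2 1 x 0 = 1 * Q x + 1 * ((g1 x 0)^2 / g x 0)"
        unfolding kl_integrand_d2_def Q_def lnq[OF B0 x zero_less_one] lng0[OF x] by (simp add: algebra_simps)
    qed
    have Ii: "set_integrable lborel {1..} (\<lambda>x. (g1 x 0)^2 / g x 0)"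
      using solve2[OF Qi kl2_int[OF zero_less_one B0] _ pw] by simp
    have "F2 1 0 = 1 * int1 Q + 1 * I" unfolding F2_def I_def
      by (rule lin2(2)[OF Qi Ii pw])
    thus ?thesis using Qv g2_zero by simp
  qed
  have Ieq: "I = int1 (\<lambda>x. x powr (\<alpha>+1) / \<alpha> * (h x)^2)"
    unfolding I_def int1_def
  proof (rule set_lebesgue_integral_cong, simp, intro allI impI)
    fix x :: real assume "x \<in> {1..}"
    hence x: "x \<ge> 1" by simp
    have "x powr (-\<alpha>-1) = inverse (x powr (\<alpha>+1))" using x by (simp add: powr_minus[symmetric])
    hence "(g1 x 0)^2 / g x 0 = (h x)^2 / (\<alpha> * inverse (x powr (\<alpha>+1)))"
      using g_pareto x hg1[OF x] by simp
    also have "\<dots> = x powr (\<alpha>+1) / \<alpha> * (h x)^2" using x alpha_pos by (simp add: field_simps)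
    finally show "(g1 x 0)^2 / g x 0 = x powr (\<alpha>+1) / \<alpha> * (h x)^2" .
  qed
  have Meq: "int1 (\<lambda>x. \<alpha> * h x * ln x) = \<alpha> * M1"
  proof -
    have "int1 (\<lambda>x. \<alpha> * h x * ln x) = int1 (\<lambda>x. \<alpha> * (g1 x 0 * ln x))"
      unfolding int1_def by (rule set_lebesgue_integral_cong) (use hg1 in auto)
    thus ?thesis unfolding M1_def int1_def by simp
  qed
  define Mf where "Mf t = (F e t - F 1 t + 1) / (e - 1)" for t
  define M1f where "M1f t = (F1 e t - F1 1 t) / (e - 1)" for t
  define M2f where "M2f t = (F2 e t - F2 1 t) / (e - 1)" for t
  have MfM: "Mf t = M t" if t: "t \<in> B" for t
    using Fdec[OF t e1(2)] e1 unfolding Mf_def by (simp add: field_simps)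
  have dMf: "(Mf has_real_derivative M1f t) (at t)" if t: "t \<in> B" for t
  proof -
    have "((\<lambda>s. (F e s - F 1 s + 1) / (e - 1)) has_real_derivative (F1 e t - F1 1 t + 0) / (e - 1)) (at t)"
      by (rule DERIV_cdivide[OF DERIV_add[OF DERIV_diff[OF dF[OF e1(2) t] dF[OF zero_less_one t]] DERIV_const]])
    thus ?thesis unfolding Mf_def M1f_def by simp
  qed
  have dM1f: "(M1f has_real_derivative M2f 0) (at 0)"
  proof -
    have "((\<lambda>s. (F1 e s - F1 1 s) / (e - 1)) has_real_derivative (F2 e 0 - F2 1 0) / (e - 1)) (at 0)"
      by (rule DERIV_cdivide[OF DERIV_diff[OF dF1[OF e1(2) B0] dF1[OF zero_less_one B0]]])
    thus ?thesis unfolding M1f_def M2f_def by simp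
  qed
  have dF11: "(F1 1 has_real_derivative F2 1 0) (at 0)" by (rule dF1[OF zero_less_one B0])
  have Mf0: "Mf 0 = 1 / \<alpha>" using MfM[OF B0] M0 by simp
  have M1f0: "M1f 0 = M1" using F1dec e1 unfolding M1f_def by simp
  have M2f0: "M2f 0 = M2" using F2dec e1 unfolding M2f_def by simp
  have "isCont Mf 0" by (rule DERIV_isCont[OF dMf[OF B0]])
  hence "(Mf \<longlongrightarrow> Mf 0) (at 0)" by (simp add: isCont_def)
  from order_tendstoD(1)[OF this, of 0] have "eventually (\<lambda>t. Mf t > 0) (at 0)"
    using Mf0 alpha_pos by simp
  hence evpos: "eventually (\<lambda>t. Mf t > 0) (nhds 0)" using Mf0 alpha_pos
    by (simp add: eventually_nhds_conv_at)
  have evB: "eventually (\<lambda>t. t \<in> B) (nhds 0)" by (rule eventually_nhds_in_open[OF oB B0])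
  define K where "K t = F 1 t + ln (Mf t) + 1 - Mf t" for t
  define K' where "K' t = F1 1 t + M1f t / Mf t - M1f t" for t
  define K2 where "K2 = F2 1 0 + (M2f 0 * Mf 0 - M1f 0 * M1f 0) / (Mf 0)^2 - M2f 0"
  have evK: "eventually (\<lambda>t. (K has_real_derivative K' t) (at t)) (nhds 0)"
    using evpos evB
  proof eventually_elim
    case (elim t)
    show ?case unfolding K_def K'_def
      using dF[OF zero_less_one elim(2)] dMf[OF elim(2)] elim(1)
      by (auto intro!: derivative_eq_intros simp: field_simps)
  qed
  have dK': "(K' has_real_derivative K2) (at 0)"
    unfolding K'_def K2_def using dF11 dM1f dMf[OF B0] Mf0 alpha_pos
    by (auto intro!: derivative_eq_intros simp: field_simps power2_eq_square)
  have K0: "K 0 = 0" unfolding K_def F10 Mf0 using alpha_pos by (simp add: ln_div field_simps)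
  have K'0: "K' 0 = 0" unfolding K'_def F110 Mf0 M1f0 using alpha_pos by (simp add: field_simps)
  have K2v: "K2 = I - (\<alpha> * M1)^2" unfolding K2_def F210 Mf0 M1f0 M2f0 using alpha_pos
    by (simp add: field_simps power2_eq_square)
  have KLeq: "KL g t = K t" if t: "t \<in> B" and p: "Mf t > 0" for t
    unfolding KL_def
  proof (rule cInf_eq_minimum)
    have a: "ln (1 / Mf t) = - ln (Mf t)" using p by (simp add: ln_div)
    have b: "(1 / Mf t - 1) * Mf t = 1 - Mf t" using p by (simp add: field_simps)
    have "F (1 / Mf t) t = F 1 t - ln (1 / Mf t) + (1 / Mf t - 1) * Mf t"
      using Fdec[OF t, of "1 / Mf t"] p MfM[OF t] by simp
    also have "\<dots> = K t" unfolding a b K_def by simp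
    finally have "int1 (\<lambda>x. kl_integrand g (1 / Mf t) x t) = K t" unfolding F_def .
    thus "K t \<in> {int1 (\<lambda>x. kl_integrand g l x t) |l. l > 0}" using p
      by (intro CollectI exI[of _ "1 / Mf t"]) auto
  next
    fix y assume "y \<in> {int1 (\<lambda>x. kl_integrand g l x t) |l. l > 0}"
    then obtain l where l: "l > 0" and y: "y = F l t" unfolding F_def by auto
    have "ln (l * Mf t) \<le> l * Mf t - 1" using l p by (intro ln_le_minus_one) auto
    hence "ln l + ln (Mf t) \<le> l * Mf t - 1" using l p by (simp add: ln_mult)
    thus "K t \<le> y" unfolding y Fdec[OF t l] K_def MfM[OF t, symmetric]
      by (simp add: algebra_simps)
  qed
  have tay: "(\<lambda>t. K t - K2/2 * t^2) \<in> o[at 0](\<lambda>t. t^2)"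
    by (rule taylor2[OF evK dK' K0 K'0])
  have tay2: "(\<lambda>t. 2 * (K t - K2/2 * t^2)) \<in> o[at 0](\<lambda>t. t^2)"
    by (rule landau_o.small.cmult_in_iff[THEN iffD2], simp, rule tay)
  have "eventually (\<lambda>t. t \<in> B \<and> Mf t > 0) (at 0)"
    using evpos evB by (simp add: eventually_nhds_conv_at eventually_conj)
  hence ev: "eventually (\<lambda>t. 2 * (K t - K2/2 * t^2) = 2 * KL g t
            - t^2 * (int1 (\<lambda>x. x powr (\<alpha>+1) / \<alpha> * (h x)^2)
                     - (int1 (\<lambda>x. \<alpha> * h x * ln x))^2)) (at 0)"
  proof eventually_elim
    case (elim t)
    have k: "KL g t = K t" using elim by (intro KLeq) auto
    show ?case unfolding k Ieq[symmetric] Meq K2v by (simp add: field_simps)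
  qed
  show ?thesis using landau_o.small.in_cong[OF ev] tay2 by blast
qed

end
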